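(* Let $F$ be a non-archimedean local field with ring of integers $\mathcal{O}$ and uniformizer $\varpi$, let $G=\mathrm{GL}_{2n}(F)$ with diagonal torus $T$, upper triangular Borel subgroup $B$ and Weyl group $W$ (the permutation matrices), and let $\Delta$ be the set of simple roots determined by $B$. Let $S,T'\subset\Delta$ and let $w\in W$ be such that $wT'>0$ and $w^{-1}S>0$. Then \[\operatorname{Levi}(w^{-1}P_{\Delta,S}w)\cap J_{\Delta,T'}=J_{w^{-1}S,\;T'\cap w^{-1}S}.\]
   Context: For sets $S,T$ of roots of $G$ with respect to the diagonal torus, $P_{S,T}$ denotes the subgroup of $G$ whose Lie algebra is $\mathfrak{p}_{S,T}=\mathfrak{t}\oplus\bigoplus_{\alpha}\mathfrak{g}_\alpha$, the sum being over all roots $\alpha$ lying in $\mathbb{Z}_{\geq 0}S-\mathbb{Z}_{\geq 0}T$ (i.e. expressible as a nonnegative integer combination of elements of $S$ minus a nonnegative integer combination of elements of $T$); here $\mathfrak{t}$ is the Lie algebra of the diagonal torus and $\mathfrak{g}_\alpha$ the root space. Thus $P_{\Delta,\emptyset}=B$, $P_{\Delta,\Delta}=G$, $P_{\Delta,S}$ is the standard parabolic subgroup associated with $S\subset\Delta$, and its Levi subgroup is $P_{S,S}$. One sets $J_{S,T}=\{g\in P_{S,S}(\mathcal{O}) : g \bmod \varpi\in P_{S,T}(\mathcal{O}/\varpi)\}$ (so $J_{\Delta,\emptyset}$ is the Iwahori subgroup and $J_{\Delta,\Delta}=\mathrm{GL}_{2n}(\mathcal{O})$). For a set $R$ of roots,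 $wR>0$ means $w$ maps every root in $R$ to a positive root. *)

theory Defs
  imports Main "HOL-Combinatorics.Permutations"
begin

text \<open>A field F with a normalized discrete valuation v (v x is only meaningful for x \<noteq> 0),
  complete with respect to v and with finite residue field.\<close>

definition val_ring :: "('a::field \<Rightarrow> int) \<Rightarrow> 'a set" where
  "val_ring v = {x. x = 0 \<or> v x \<ge> 0}"

definition is_nonarch_local_field :: "('a::field \<Rightarrow> int) \<Rightarrow> bool" where
  "is_nonarch_local_field v \<longleftrightarrow>
     (\<forall>x y. x \<noteq> 0 \<longrightarrow> y \<noteq> 0 \<longrightarrow> v (x * y) = v x + v y)
   \<and> (\<forall>x y. x \<noteq> 0 \<longrightarrow> y \<noteq> 0 \<longrightarrow> x + y \<noteq> 0 \<longrightarrow> v (x + y) \<ge> min (v x) (v y))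
   \<and> (\<exists>x. x \<noteq> 0 \<and> v x = 1)
   \<and> (\<forall>f :: nat \<Rightarrow> 'a.
        (\<forall>k::int. \<exists>N. \<forall>p\<ge>N. \<forall>q\<ge>N. f p = f q \<or> v (f p - f q) \<ge> k) \<longrightarrow>
        (\<exists>L. \<forall>k::int. \<exists>N. \<forall>p\<ge>N. f p = L \<or> v (f p - L) \<ge> k))
   \<and> (\<exists>R. finite R \<and> R \<subseteq> val_ring v \<and>
        (\<forall>x\<in>val_ring v. \<exists>r\<in>R. x - r = 0 \<or> v (x - r) \<ge> 1))"

definition is_uniformizer :: "('a::field \<Rightarrow> int) \<Rightarrow> 'a \<Rightarrow> bool" where
  "is_uniformizer v \<pi> \<longleftrightarrow> \<pi> \<noteq> 0 \<and> v \<pi> = 1"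

definition unif_ideal :: "('a::field \<Rightarrow> int) \<Rightarrow> 'a \<Rightarrow> 'a set" where
  "unif_ideal v \<pi> = {\<pi> * x | x. x \<in> val_ring v}"

type_synonym 'a sqmat = "nat \<Rightarrow> nat \<Rightarrow> 'a"

definition mats :: "nat \<Rightarrow> 'a::zero sqmat set" where
  "mats m = {A. \<forall>i j. (m \<le> i \<or> m \<le> j) \<longrightarrow> A i j = 0}"

definition mmul :: "nat \<Rightarrow> 'a::comm_ring_1 sqmat \<Rightarrow> 'a sqmat \<Rightarrow> 'a sqmat" where
  "mmul m A B = (\<lambda>i j. if i < m \<and> j < m then (\<Sum>k<m. A i k * B k j) else 0)"

definition idm :: "nat \<Rightarrow> 'a::comm_ring_1 sqmat" where
  "idm m = (\<lambda>i j. if i < m \<and> i = j then 1 else 0)"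

text \<open>GL_m over the subring Rg of the field (Rg = UNIV gives GL_m(F), Rg = O gives GL_m(O)).\<close>
definition GLm :: "nat \<Rightarrow> 'a::field set \<Rightarrow> 'a sqmat set" where
  "GLm m Rg = {A \<in> mats m. (\<forall>i j. A i j \<in> Rg) \<and>
      (\<exists>B \<in> mats m. (\<forall>i j. B i j \<in> Rg) \<and> mmul m A B = idm m \<and> mmul m B A = idm m)}"

text \<open>Permutation matrix of a permutation \<sigma> of {..<m}: it sends e_j to e_(\<sigma> j).\<close>
definition perm_mat :: "nat \<Rightarrow> (nat \<Rightarrow> nat) \<Rightarrow> 'a::comm_ring_1 sqmat" where
  "perm_mat m \<sigma> = (\<lambda>i j. if i < m \<and> j < m \<and> i = \<sigma> j then 1 else 0)"

definition conj_by_perm :: "nat \<Rightarrow> (nat \<Rightarrow> nat) \<Rightarrow> 'a::comm_ring_1 sqmat set \<Rightarrow> 'a sqmat set" where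
  "conj_by_perm m \<sigma> H =
     {mmul m (perm_mat m (inv \<sigma>)) (mmul m g (perm_mat m \<sigma>)) | g. g \<in> H}"

text \<open>The root e_i - e_j is represented by the pair (i,j), i \<noteq> j.\<close>
definition roots :: "nat \<Rightarrow> (nat \<times> nat) set" where
  "roots m = {(i, j). i < m \<and> j < m \<and> i \<noteq> j}"

definition root_vec :: "nat \<times> nat \<Rightarrow> nat \<Rightarrow> int" where
  "root_vec \<alpha> k = (if k = fst \<alpha> then 1 else 0) - (if k = snd \<alpha> then 1 else 0)"

definition simple_roots :: "nat \<Rightarrow> (nat \<times> nat) set" where
  "simple_roots m = {(i, i + 1) | i. i + 1 < m}"

definition pos_root :: "nat \<times> nat \<Rightarrow> bool" where
  "pos_root \<alpha> \<longleftrightarrow> fst \<alpha> < snd \<alpha>"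

definition root_act :: "(nat \<Rightarrow> nat) \<Rightarrow> nat \<times> nat \<Rightarrow> nat \<times> nat" where
  "root_act \<sigma> \<alpha> = (\<sigma> (fst \<alpha>), \<sigma> (snd \<alpha>))"

definition in_cone :: "(nat \<times> nat) set \<Rightarrow> (nat \<times> nat) set \<Rightarrow> nat \<times> nat \<Rightarrow> bool" where
  "in_cone S T \<alpha> \<longleftrightarrow> (\<exists>a b :: nat \<times> nat \<Rightarrow> nat.
      root_vec \<alpha> = (\<lambda>k. (\<Sum>s\<in>S. int (a s) * root_vec s k) - (\<Sum>t\<in>T. int (b t) * root_vec t k)))"

text \<open>P_{S,T}(Rg): elements of GL_m(Rg) whose off-diagonal support lies in the root spaces
  of p_{S,T} (the group with Lie algebra t + sum of g_\<alpha>, \<alpha> \<in> Z_{\<ge>0}S - Z_{\<ge>0}T).\<close>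
definition P_ST :: "nat \<Rightarrow> 'a::field set \<Rightarrow> (nat \<times> nat) set \<Rightarrow> (nat \<times> nat) set \<Rightarrow> 'a sqmat set" where
  "P_ST m Rg S T = {g \<in> GLm m Rg. \<forall>\<alpha>\<in>roots m. g (fst \<alpha>) (snd \<alpha>) \<noteq> 0 \<longrightarrow> in_cone S T \<alpha>}"

text \<open>J_{S,T} = {g \<in> P_{S,S}(O) : g mod \<pi> \<in> P_{S,T}(O/\<pi>)}; the reduction of g \<in> GL_m(O) is
  automatically invertible, so the condition is that entries outside the pattern of
  P_{S,T} lie in \<pi>O.\<close>
definition J_ST :: "('a::field \<Rightarrow> int) \<Rightarrow> 'a \<Rightarrow> nat \<Rightarrow> (nat \<times> nat) set \<Rightarrow> (nat \<times> nat) set \<Rightarrow> 'a sqmat set" where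
  "J_ST v \<pi> m S T = {g \<in> P_ST m (val_ring v) S S.
      \<forall>\<alpha>\<in>roots m. \<not> in_cone S T \<alpha> \<longrightarrow> g (fst \<alpha>) (snd \<alpha>) \<in> unif_ideal v \<pi>}"

definition elem_mat :: "nat \<Rightarrow> nat \<Rightarrow> nat \<Rightarrow> 'a::comm_ring_1 \<Rightarrow> 'a sqmat" where
  "elem_mat m i j c = (\<lambda>k l. idm m k l + (if k = i \<and> l = j then c else 0))"

definition roots_of :: "nat \<Rightarrow> 'a::comm_ring_1 sqmat set \<Rightarrow> (nat \<times> nat) set" where
  "roots_of m H = {\<alpha> \<in> roots m. \<forall>c. elem_mat m (fst \<alpha>) (snd \<alpha>) c \<in> H}"

text \<open>Levi subgroup (containing the diagonal torus) of a parabolic H \<supseteq> T: generated by T and the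
  U_\<alpha> with \<plusminus>\<alpha> roots of H, i.e. the elements of H supported on the diagonal and on such \<alpha>.\<close>
definition Levi :: "nat \<Rightarrow> 'a::comm_ring_1 sqmat set \<Rightarrow> 'a sqmat set" where
  "Levi m H = {g \<in> H. \<forall>\<alpha>\<in>roots m. g (fst \<alpha>) (snd \<alpha>) \<noteq> 0 \<longrightarrow>
                  \<alpha> \<in> roots_of m H \<and> (snd \<alpha>, fst \<alpha>) \<in> roots_of m H}"

end

theory Submission imports Defs begin

definition conn :: "(nat \<times> nat) set \<Rightarrow> nat \<Rightarrow> nat \<Rightarrow> bool" where
  "conn A a b \<longleftrightarrow> (\<forall>k. a \<le> k \<longrightarrow> k < b \<longrightarrow> (k, Suc k) \<in> A)"

lemma rv_tele:
  assumes "i \<le> j"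
  shows "(\<Sum>k\<in>{i..<j}. root_vec (k, Suc k) x) = (if x = i then 1 else 0) - (if x = j then 1 else 0)"
  using assms
proof (induct j rule: dec_induct)
  case base then show ?case by simp
next
  case (step n) then show ?case by (simp add: root_vec_def)
qed

lemma rv_prefix: "(\<Sum>x\<in>{..p}. root_vec s x) = (if fst s \<le> p then 1 else 0) - (if snd s \<le> p then 1 else 0)"
  by (simp add: root_vec_def sum_subtractf)

lemma sum_simple:
  assumes "finite A" "\<forall>s\<in>A. snd s = Suc (fst s)"
  shows "(\<Sum>s\<in>A. int (a s) * (\<Sum>x\<in>{..p}. root_vec s x)) = (if (p, Suc p) \<in> A then int (a (p, Suc p)) else 0)"
proof -
  have "(\<Sum>s\<in>A. int (a s) * (\<Sum>x\<in>{..p}. root_vec s x)) = (\<Sum>s\<in>A. if s = (p, Suc p) then int (a s) else 0)"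
  proof (rule sum.cong)
    fix s assume "s \<in> A"
    then have "snd s = Suc (fst s)" using assms by auto
    then show "int (a s) * (\<Sum>x\<in>{..p}. root_vec s x) = (if s = (p, Suc p) then int (a s) else 0)"
      unfolding rv_prefix by (cases s) auto
  qed simp
  also have "\<dots> = (if (p, Suc p) \<in> A then int (a (p, Suc p)) else 0)"
    using assms(1) by (simp add: sum.delta')
  finally show ?thesis .
qed

lemma sum_ind:
  assumes "finite A" "(\<lambda>k. (k, Suc k)) ` {i..<j} \<subseteq> A"
  shows "(\<Sum>s\<in>A. int (if s \<in> (\<lambda>k. (k, Suc k)) ` {i..<j} then 1 else 0) * root_vec s x)
     = (\<Sum>k\<in>{i..<j}. root_vec (k, Suc k) x)"
proof -
  let ?X = "(\<lambda>k. (k, Suc k)) ` {i..<j}"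
  have "(\<Sum>s\<in>A. int (if s \<in> ?X then 1 else 0) * root_vec s x) = (\<Sum>s\<in>A. if s \<in> ?X then root_vec s x else 0)"
    by (rule sum.cong) auto
  also have "\<dots> = (\<Sum>s\<in>A \<inter> ?X. root_vec s x)"
    using assms(1) by (simp add: sum.inter_restrict)
  also have "A \<inter> ?X = ?X" using assms(2) by blast
  also have "(\<Sum>s\<in>?X. root_vec s x) = (\<Sum>k\<in>{i..<j}. root_vec (k, Suc k) x)"
    by (rule sum.reindex_cong[where l="\<lambda>k. (k, Suc k)"]) (auto simp: inj_on_def)
  finally show ?thesis .
qed

lemma cone_char:
  assumes fA: "finite A" and fB: "finite B" and sA: "\<forall>s\<in>A. snd s = Suc (fst s)"
    and sB: "\<forall>s\<in>B. snd s = Suc (fst s)" and ij: "i \<noteq> j"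
  shows "in_cone A B (i,j) \<longleftrightarrow> (i < j \<and> conn A i j) \<or> (j < i \<and> conn B j i)"
proof
  assume "in_cone A B (i,j)"
  then obtain a b :: "nat \<times> nat \<Rightarrow> nat" where eq: "root_vec (i,j) = (\<lambda>k. (\<Sum>s\<in>A. int (a s) * root_vec s k) - (\<Sum>t\<in>B. int (b t) * root_vec t k))"
    unfolding in_cone_def by blast
  have key: "(if i \<le> p then 1 else 0) - (if j \<le> p then 1 else 0) = (if (p, Suc p) \<in> A then int (a (p, Suc p)) else 0) - (if (p, Suc p) \<in> B then int (b (p, Suc p)) else 0)" for p
  proof -
    have "(\<Sum>x\<in>{..p}. root_vec (i,j) x) = (\<Sum>x\<in>{..p}. (\<Sum>s\<in>A. int (a s) * root_vec s x) - (\<Sum>t\<in>B. int (b t) * root_vec t x))"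
      by (simp add: eq)
    also have "\<dots> = (\<Sum>s\<in>A. int (a s) * (\<Sum>x\<in>{..p}. root_vec s x)) - (\<Sum>t\<in>B. int (b t) * (\<Sum>x\<in>{..p}. root_vec t x))"
      by (simp add: sum_subtractf sum_distrib_left sum.swap[of _ "{..p}"])
    also have "\<dots> = (if (p, Suc p) \<in> A then int (a (p, Suc p)) else 0) - (if (p, Suc p) \<in> B then int (b (p, Suc p)) else 0)"
      using sum_simple[OF fA sA] sum_simple[OF fB sB] by simp
    finally show ?thesis by (simp add: rv_prefix)
  qed
  show "(i < j \<and> conn A i j) \<or> (j < i \<and> conn B j i)"
  proof (cases "i < j")
    case True
    have "conn A i j" unfolding conn_def
    proof (intro allI impI)
      fix k assume "i \<le> k" "k < j"
      with key[of k] show "(k, Suc k) \<in> A" by (auto split: if_splits)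
    qed
    with True show ?thesis by simp
  next
    case False
    then have ji: "j < i" using ij by simp
    have "conn B j i" unfolding conn_def
    proof (intro allI impI)
      fix k assume "j \<le> k" "k < i"
      with key[of k] show "(k, Suc k) \<in> B" by (auto split: if_splits)
    qed
    with ji show ?thesis by simp
  qed
next
  assume H: "(i < j \<and> conn A i j) \<or> (j < i \<and> conn B j i)"
  show "in_cone A B (i,j)"
  proof (cases "i < j")
    case True
    with H have c: "conn A i j" by auto
    let ?X = "(\<lambda>k. (k, Suc k)) ` {i..<j}"
    have sub: "?X \<subseteq> A" using c by (auto simp: conn_def)
    show ?thesis unfolding in_cone_def
      apply (rule exI[where x="\<lambda>s. if s \<in> ?X then 1 else 0"])
      apply (rule exI[where x="\<lambda>s. 0"])
      using sum_ind[OF fA sub] rv_tele[of i j] True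
      by (auto simp: root_vec_def fun_eq_iff)
  next
    case False
    with H ij have ji: "j < i" and c: "conn B j i" by auto
    let ?X = "(\<lambda>k. (k, Suc k)) ` {j..<i}"
    have sub: "?X \<subseteq> B" using c by (auto simp: conn_def)
    show ?thesis unfolding in_cone_def
      apply (rule exI[where x="\<lambda>s. 0"])
      apply (rule exI[where x="\<lambda>s. if s \<in> ?X then 1 else 0"])
      using sum_ind[OF fB sub] rv_tele[of j i] ji
      by (auto simp: root_vec_def fun_eq_iff)
  qed
qed


lemma root_vec_act: "bij f \<Longrightarrow> root_vec (root_act f s) k = root_vec s (inv f k)"
  unfolding root_vec_def root_act_def
  by (auto simp: bij_inv_eq_iff) (metis bij_inv_eq_iff)+

lemma cone_transport1:
  assumes "bij f" "in_cone A B s"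
  shows "in_cone (root_act f ` A) (root_act f ` B) (root_act f s)"
proof -
  obtain a b :: "nat \<times> nat \<Rightarrow> nat" where eq: "root_vec s = (\<lambda>k. (\<Sum>s\<in>A. int (a s) * root_vec s k) - (\<Sum>t\<in>B. int (b t) * root_vec t k))"
    using assms(2) unfolding in_cone_def by blast
  have inj: "inj_on (root_act f) X" for X
    using assms(1) unfolding inj_on_def root_act_def bij_def by (auto simp: inj_eq)
  define a' where "a' = a \<circ> root_act (inv f)"
  define b' where "b' = b \<circ> root_act (inv f)"
  have ri: "root_act (inv f) (root_act f x) = x" for x
    using assms(1) by (simp add: root_act_def bij_is_inj)
  have E: "root_vec (root_act f s) k = (\<Sum>s\<in>root_act f ` A. int (a' s) * root_vec s k) - (\<Sum>t\<in>root_act f ` B. int (b' t) * root_vec t k)" for k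
  proof -
    have "root_vec (root_act f s) k = root_vec s (inv f k)" by (rule root_vec_act[OF assms(1)])
    also have "\<dots> = (\<Sum>s\<in>A. int (a s) * root_vec s (inv f k)) - (\<Sum>t\<in>B. int (b t) * root_vec t (inv f k))"
      by (simp add: eq)
    also have "(\<Sum>s\<in>A. int (a s) * root_vec s (inv f k)) = (\<Sum>s\<in>root_act f ` A. int (a' s) * root_vec s k)"
      by (simp add: sum.reindex[OF inj] a'_def ri root_vec_act[OF assms(1)])
    also have "(\<Sum>s\<in>B. int (b s) * root_vec s (inv f k)) = (\<Sum>s\<in>root_act f ` B. int (b' s) * root_vec s k)"
      by (simp add: sum.reindex[OF inj] b'_def ri root_vec_act[OF assms(1)])
    finally show ?thesis .
  qed
  show ?thesis unfolding in_cone_def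
    by (rule exI[of _ a'], rule exI[of _ b'], rule ext, rule E)
qed

lemma cone_transport:
  assumes "bij f"
  shows "in_cone (root_act f ` A) (root_act f ` B) (root_act f s) \<longleftrightarrow> in_cone A B s"
proof
  assume "in_cone (root_act f ` A) (root_act f ` B) (root_act f s)"
  from cone_transport1[OF bij_imp_bij_inv[OF assms] this]
  have ri: "root_act (inv f) (root_act f x) = x" for x
    using assms by (simp add: root_act_def bij_is_inj)
  have "root_act (inv f) ` root_act f ` X = X" for X
    by (simp add: image_image ri)
  with cone_transport1[OF bij_imp_bij_inv[OF assms]] \<open>in_cone (root_act f ` A) (root_act f ` B) (root_act f s)\<close>
  show "in_cone A B s" by (metis ri)
qed (rule cone_transport1[OF assms])

lemma mono_step:
  assumes "\<forall>q. a \<le> q \<longrightarrow> q < b \<longrightarrow> f q < (f (Suc q) :: nat)" "a \<le> x" "x \<le> b"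
  shows "f a + (x - a) \<le> f x"
  using assms(2,3)
proof (induct x rule: dec_induct)
  case base then show ?case by simp
next
  case (step n)
  then have "f n < f (Suc n)" using assms(1) by auto
  with step show ?case by simp
qed

lemma exact_step:
  assumes "\<forall>q. a \<le> q \<longrightarrow> q < b \<longrightarrow> f (Suc q) = Suc (f q :: nat)" "a \<le> x" "x \<le> b"
  shows "f x = f a + (x - a)"
  using assms(2,3)
proof (induct x rule: dec_induct)
  case base then show ?case by simp
next
  case (step n)
  then have "f (Suc n) = Suc (f n)" using assms(1) by auto
  with step show ?case by simp
qed


lemma key:
  fixes \<sigma> \<tau> :: "nat \<Rightarrow> nat"
  assumes bij: "bij \<sigma>" and tau: "\<tau> = inv \<sigma>"
    and hT: "\<forall>k. (k, Suc k) \<in> T' \<longrightarrow> \<sigma> k < \<sigma> (Suc k)"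
    and hS: "\<forall>q. (q, Suc q) \<in> S \<longrightarrow> \<tau> q < \<tau> (Suc q)"
    and sT: "\<forall>s\<in>T'. snd s = Suc (fst s)"
    and ij: "i \<noteq> j"
    and same: "(\<sigma> i < \<sigma> j \<and> conn S (\<sigma> i) (\<sigma> j)) \<or> (\<sigma> j < \<sigma> i \<and> conn S (\<sigma> j) (\<sigma> i))"
  shows "(i < j \<or> (j < i \<and> conn T' j i)) \<longleftrightarrow>
    (\<sigma> i < \<sigma> j \<and> conn S (\<sigma> i) (\<sigma> j)) \<or> (\<sigma> j < \<sigma> i \<and> conn (root_act \<sigma> ` T' \<inter> S) (\<sigma> j) (\<sigma> i))"
proof -
  have ts: "\<tau> (\<sigma> x) = x" for x using bij tau by (simp add: bij_is_inj)
  have st: "\<sigma> (\<tau> x) = x" for x using bij tau by (simp add: bij_is_surj surj_f_inv_f)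
  have tmono: "\<tau> a + (b - a) \<le> \<tau> b" if "conn S a b" "a \<le> b" for a b
    by (rule mono_step[of a b \<tau> b]) (use that hS in \<open>auto simp: conn_def\<close>)
  have smono: "\<sigma> a + (x - a) \<le> \<sigma> x" if "conn T' a b" "a \<le> x" "x \<le> b" for a b x
    by (rule mono_step[of a b \<sigma> x]) (use that hT in \<open>auto simp: conn_def\<close>)
  show ?thesis
  proof (cases "i < j")
    case True
    have "\<not> (\<sigma> j < \<sigma> i \<and> conn S (\<sigma> j) (\<sigma> i))"
    proof
      assume a: "\<sigma> j < \<sigma> i \<and> conn S (\<sigma> j) (\<sigma> i)"
      then have "\<tau> (\<sigma> j) + (\<sigma> i - \<sigma> j) \<le> \<tau> (\<sigma> i)" using tmono by auto
      then have "j + (\<sigma> i - \<sigma> j) \<le> i" by (simp add: ts)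
      with a True show False by linarith
    qed
    with same True show ?thesis by auto
  next
    case False
    then have ji: "j < i" using ij by simp
    have n1: "\<not> (\<sigma> i < \<sigma> j \<and> conn S (\<sigma> i) (\<sigma> j))"
    proof
      assume a: "\<sigma> i < \<sigma> j \<and> conn S (\<sigma> i) (\<sigma> j)"
      then have "\<tau> (\<sigma> i) + (\<sigma> j - \<sigma> i) \<le> \<tau> (\<sigma> j)" using tmono by auto
      then have "i + (\<sigma> j - \<sigma> i) \<le> j" by (simp add: ts)
      with a ji show False by linarith
    qed
    have "conn T' j i \<longleftrightarrow> (\<sigma> j < \<sigma> i \<and> conn (root_act \<sigma> ` T' \<inter> S) (\<sigma> j) (\<sigma> i))"
    proof
      assume cT: "conn T' j i"
      have s1: "\<sigma> j + (i - j) \<le> \<sigma> i" using smono[OF cT, of i] ji by simp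
      then have sji: "\<sigma> j < \<sigma> i" using ji by simp
      with same n1 have cS: "conn S (\<sigma> j) (\<sigma> i)" by auto
      have "\<tau> (\<sigma> j) + (\<sigma> i - \<sigma> j) \<le> \<tau> (\<sigma> i)" using tmono[OF cS] sji by simp
      then have t1: "j + (\<sigma> i - \<sigma> j) \<le> i" by (simp add: ts)
      have sx: "\<sigma> x = \<sigma> j + (x - j)" if "j \<le> x" "x \<le> i" for x
      proof -
        have "\<sigma> j + (x - j) \<le> \<sigma> x" using smono[OF cT] that by simp
        moreover have "conn T' x i" using cT that by (auto simp: conn_def)
        then have "\<sigma> x + (i - x) \<le> \<sigma> i" using smono[of x i i] that by simp
        ultimately show ?thesis using s1 t1 that by linarith
      qed
      have "conn (root_act \<sigma> ` T' \<inter> S) (\<sigma> j) (\<sigma> i)" unfolding conn_def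
      proof (intro allI impI)
        fix q assume q: "\<sigma> j \<le> q" "q < \<sigma> i"
        define x where "x = j + (q - \<sigma> j)"
        have x: "j \<le> x" "x < i" using q s1 t1 by (auto simp: x_def)
        have "\<sigma> x = q" using sx[of x] x q by (simp add: x_def)
        moreover have "\<sigma> (Suc x) = Suc q" using sx[of "Suc x"] x q by (simp add: x_def)
        moreover have "(x, Suc x) \<in> T'" using cT x by (auto simp: conn_def)
        ultimately have "(q, Suc q) \<in> root_act \<sigma> ` T'"
          by (metis image_eqI root_act_def fst_conv snd_conv)
        moreover have "(q, Suc q) \<in> S" using cS q by (auto simp: conn_def)
        ultimately show "(q, Suc q) \<in> root_act \<sigma> ` T' \<inter> S" by blast
      qed
      with sji show "\<sigma> j < \<sigma> i \<and> conn (root_act \<sigma> ` T' \<inter> S) (\<sigma> j) (\<sigma> i)" by simp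
    next
      assume a: "\<sigma> j < \<sigma> i \<and> conn (root_act \<sigma> ` T' \<inter> S) (\<sigma> j) (\<sigma> i)"
      have stepT: "\<tau> (Suc q) = Suc (\<tau> q) \<and> (\<tau> q, Suc (\<tau> q)) \<in> T'" if "\<sigma> j \<le> q" "q < \<sigma> i" for q
      proof -
        have "(q, Suc q) \<in> root_act \<sigma> ` T'" using a that by (auto simp: conn_def)
        then obtain y where y: "y \<in> T'" "(q, Suc q) = (\<sigma> (fst y), \<sigma> (snd y))"
          by (auto simp: root_act_def)
        then have "snd y = Suc (fst y)" using sT by auto
        with y have "fst y = \<tau> q" "\<tau> (Suc q) = Suc (fst y)" by (auto simp: ts)
        with y \<open>snd y = Suc (fst y)\<close> show ?thesis by (metis prod.collapse)
      qed
      have tx: "\<tau> x = \<tau> (\<sigma> j) + (x - \<sigma> j)" if "\<sigma> j \<le> x" "x \<le> \<sigma> i" for x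
        by (rule exact_step[of "\<sigma> j" "\<sigma> i"]) (use stepT that in auto)
      have ii: "i = j + (\<sigma> i - \<sigma> j)" using tx[of "\<sigma> i"] a by (simp add: ts)
      show "conn T' j i" unfolding conn_def
      proof (intro allI impI)
        fix k assume k: "j \<le> k" "k < i"
        define q where "q = \<sigma> j + (k - j)"
        have q: "\<sigma> j \<le> q" "q < \<sigma> i" using k ii by (auto simp: q_def)
        have "\<tau> q = k" using tx[of q] q k by (simp add: ts q_def)
        with stepT[OF q] show "(k, Suc k) \<in> T'" by simp
      qed
    qed
    with n1 ji show ?thesis by auto
  qed
qed


definition tmat :: "nat \<Rightarrow> (nat \<Rightarrow> nat) \<Rightarrow> 'a::zero sqmat \<Rightarrow> 'a sqmat" where
  "tmat m f g = (\<lambda>i j. if i < m \<and> j < m then g (f i) (f j) else 0)"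

lemma perm_lt: "f permutes {..<m} \<Longrightarrow> i < m \<Longrightarrow> f i < m"
  using permutes_in_image[of f "{..<m}" i] by simp

lemma conj_formula:
  assumes p: "\<sigma> permutes {..<m}"
  shows "mmul m (perm_mat m (inv \<sigma>)) (mmul m (g::'a::comm_ring_1 sqmat) (perm_mat m \<sigma>)) = tmat m \<sigma> g"
proof (intro ext)
  fix i j
  have inner: "mmul m g (perm_mat m \<sigma>) k j = (if k < m \<and> j < m then g k (\<sigma> j) else 0)" for k
  proof -
    have "(\<Sum>l<m. g k l * (if l < m \<and> j < m \<and> l = \<sigma> j then 1 else 0)) = (if j < m then g k (\<sigma> j) else 0)"
      using perm_lt[OF p, of j] by (auto simp: if_distrib cong: if_cong)
    then show ?thesis by (auto simp: mmul_def perm_mat_def)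
  qed
  have eqv: "(i = inv \<sigma> k) = (k = \<sigma> i)" for k
    using p by (metis permutes_inverses(1) permutes_inverses(2))
  define X where "X = mmul m g (perm_mat m \<sigma>)"
  have outer: "(\<Sum>k<m. (if i < m \<and> k < m \<and> i = inv \<sigma> k then 1 else 0) * X k j)
      = (if i < m then X (\<sigma> i) j else 0)"
  proof -
    have "(\<Sum>k<m. (if i < m \<and> k < m \<and> i = inv \<sigma> k then 1 else 0) * X k j)
       = (\<Sum>k<m. if k = \<sigma> i \<and> i < m then X k j else 0)"
      by (rule sum.cong) (auto simp: eqv)
    also have "\<dots> = (if i < m then X (\<sigma> i) j else 0)"
      using perm_lt[OF p, of i] by (cases "i < m") (auto simp: sum.delta')
    finally show ?thesis .
  qed
  have "mmul m (perm_mat m (inv \<sigma>)) X i j = (if i < m \<and> j < m then (\<Sum>k<m. (if i < m \<and> k < m \<and> i = inv \<sigma> k then 1 else 0) * X k j) else 0)"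
    by (simp add: mmul_def perm_mat_def)
  then show "mmul m (perm_mat m (inv \<sigma>)) (mmul m g (perm_mat m \<sigma>)) i j = tmat m \<sigma> g i j"
    unfolding X_def[symmetric] using outer perm_lt[OF p, of i]
    by (auto simp: tmat_def X_def inner)
qed

lemma tmat_mmul:
  assumes p: "f permutes {..<m}"
  shows "mmul m (tmat m f A) (tmat m f B) = tmat m f (mmul m (A::'a::comm_ring_1 sqmat) B)"
proof (intro ext)
  fix i j
  show "mmul m (tmat m f A) (tmat m f B) i j = tmat m f (mmul m A B) i j"
  proof (cases "i < m \<and> j < m")
    case True
    have "(\<Sum>k<m. A (f i) (f k) * B (f k) (f j)) = (\<Sum>k\<in>f ` {..<m}. A (f i) k * B k (f j))"
      by (rule sum.reindex[symmetric, unfolded comp_def]) (use p permutes_inj_on in blast)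
    also have "f ` {..<m} = {..<m}" using p by (rule permutes_image)
    finally show ?thesis using True perm_lt[OF p, of i] perm_lt[OF p, of j]
      by (simp add: mmul_def tmat_def)
  qed (auto simp: mmul_def tmat_def)
qed

lemma tmat_idm:
  assumes p: "f permutes {..<m}"
  shows "tmat m f (idm m) = (idm m :: 'a::comm_ring_1 sqmat)"
  using perm_lt[OF p] p by (auto simp: tmat_def idm_def fun_eq_iff permutes_inj_on[OF p] inj_on_eq_iff dest: permutes_inj_on)

lemma tmat_GL:
  assumes p: "f permutes {..<m}" and "(0::'a::field) \<in> R" and g: "g \<in> GLm m R"
  shows "tmat m f g \<in> GLm m R"
proof -
  obtain B where B: "B \<in> mats m" "\<forall>i j. B i j \<in> R" "mmul m g B = idm m" "mmul m B g = idm m"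
    using g unfolding GLm_def by blast
  have ent: "\<forall>i j. g i j \<in> R" using g unfolding GLm_def by blast
  show ?thesis unfolding GLm_def
    apply (intro CollectI conjI bexI[of _ "tmat m f B"])
    using assms ent B tmat_mmul[OF p, of g B] tmat_mmul[OF p, of B g] tmat_idm[OF p]
    by (auto simp: mats_def tmat_def)
qed

lemma tmat_tmat:
  assumes p: "\<sigma> permutes {..<m}" and g: "g \<in> mats m"
  shows "tmat m \<sigma> (tmat m (inv \<sigma>) g) = g"
  using g perm_lt[OF p] permutes_inverses[OF p] by (auto simp: tmat_def mats_def fun_eq_iff)


lemma elem_mul:
  assumes "a \<noteq> b" "a < m" "b < m"
  shows "mmul m (elem_mat m a b c) (elem_mat m a b d) = (elem_mat m a b (c + d) :: 'a::comm_ring_1 sqmat)"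
proof (intro ext)
  fix i j
  show "mmul m (elem_mat m a b c) (elem_mat m a b d) i j = elem_mat m a b (c + d) i j"
  proof (cases "i < m \<and> j < m")
    case True
    have "(\<Sum>k<m. elem_mat m a b c i k * elem_mat m a b d k j)
      = (\<Sum>k<m. (if k = i then idm m k j else 0) + (if k = a \<and> j = b then idm m i k * d else 0)
              + (if k = b \<and> i = a then c * idm m k j else 0))"
      by (rule sum.cong) (use assms True in \<open>auto simp: elem_mat_def idm_def algebra_simps\<close>)
    also have "\<dots> = idm m i j + (if j = b then idm m i a * d else 0) + (if i = a then c * idm m b j else 0)"
      using assms True by (simp add: sum.distrib sum.delta' sum.If_cases)
    finally show ?thesis using assms True by (auto simp: mmul_def elem_mat_def idm_def)
  qed (use assms in \<open>auto simp: mmul_def elem_mat_def idm_def\<close>)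
qed

lemma elem_GL:
  assumes "a \<noteq> b" "a < m" "b < m"
  shows "elem_mat m a b c \<in> GLm m (UNIV :: 'a::field set)"
proof -
  have z: "elem_mat m a b 0 = (idm m :: 'a sqmat)" by (simp add: elem_mat_def fun_eq_iff)
  show ?thesis unfolding GLm_def
    apply (intro CollectI conjI bexI[of _ "elem_mat m a b (-c)"])
    using assms elem_mul[OF assms, of c "-c"] elem_mul[OF assms, of "-c" c] z
    by (auto simp: mats_def elem_mat_def idm_def)
qed

lemma tmat_elem:
  assumes p: "\<sigma> permutes {..<m}" and "i < m" "j < m"
  shows "tmat m \<sigma> (elem_mat m (\<sigma> i) (\<sigma> j) c) = elem_mat m i j c"
  using assms perm_lt[OF p] permutes_inj_on[OF p]
  by (auto simp: tmat_def elem_mat_def idm_def fun_eq_iff inj_on_eq_iff)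


theorem lemma1p1:
  fixes v :: "'a::field \<Rightarrow> int" and \<pi> :: 'a and n :: nat
    and \<sigma> :: "nat \<Rightarrow> nat" and S T' :: "(nat \<times> nat) set"
  assumes "is_nonarch_local_field v"
    and "is_uniformizer v \<pi>"
    and "\<sigma> permutes {..<2*n}"
    and "S \<subseteq> simple_roots (2*n)" and "T' \<subseteq> simple_roots (2*n)"
    and "\<forall>\<alpha>\<in>T'. pos_root (root_act \<sigma> \<alpha>)"
    and "\<forall>\<alpha>\<in>S. pos_root (root_act (inv \<sigma>) \<alpha>)"
  shows "Levi (2*n) (conj_by_perm (2*n) \<sigma> (P_ST (2*n) UNIV (simple_roots (2*n)) S))
           \<inter> J_ST v \<pi> (2*n) (simple_roots (2*n)) T'
         = J_ST v \<pi> (2*n) (root_act (inv \<sigma>) ` S) (T' \<inter> root_act (inv \<sigma>) ` S)"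
proof -
  define m where "m = 2*n"
  define D where "D = simple_roots m"
  define \<tau> where "\<tau> = inv \<sigma>"
  define P where "P = P_ST m (UNIV :: 'a set) D S"
  define H where "H = conj_by_perm m \<sigma> P"
  define S' where "S' = root_act \<tau> ` S"
  have p: "\<sigma> permutes {..<m}" using assms(3) by (simp add: m_def)
  have bij: "bij \<sigma>" using p by (rule permutes_bij)
  have pt: "\<tau> permutes {..<m}" unfolding \<tau>_def using p by (rule permutes_inv)
  have bt: "bij \<tau>" using pt by (rule permutes_bij)
  have ts: "\<tau> (\<sigma> x) = x" for x using bij by (simp add: \<tau>_def bij_is_inj)
  have st: "\<sigma> (\<tau> x) = x" for x using bij by (simp add: \<tau>_def bij_is_surj surj_f_inv_f)
  have slt: "\<sigma> i < m" if "i < m" for i using perm_lt[OF p that] .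
  have tlt: "\<tau> i < m" if "i < m" for i using perm_lt[OF pt that] .
  have Deq: "D = (\<lambda>i. (i, Suc i)) ` {i. Suc i < m}" by (auto simp: D_def simple_roots_def)
  have fD: "finite D" unfolding Deq by (rule finite_imageI, rule finite_subset[of _ "{..<m}"]) auto
  have sD: "\<forall>s\<in>D. snd s = Suc (fst s)" unfolding Deq by auto
  have SD: "S \<subseteq> D" and TD: "T' \<subseteq> D" using assms(4,5) by (auto simp: D_def m_def)
  have hT: "\<forall>k. (k, Suc k) \<in> T' \<longrightarrow> \<sigma> k < \<sigma> (Suc k)"
    using assms(6) by (auto simp: pos_root_def root_act_def)
  have hS: "\<forall>q. (q, Suc q) \<in> S \<longrightarrow> \<tau> q < \<tau> (Suc q)"
    using assms(7) by (auto simp: pos_root_def root_act_def \<tau>_def)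
  have coneD: "in_cone D X (i,j) \<longleftrightarrow> i < j \<or> (j < i \<and> conn X j i)"
    if "X \<subseteq> D" "i < m" "j < m" "i \<noteq> j" for X i j
  proof -
    have "conn D i j" using that by (auto simp: conn_def D_def simple_roots_def)
    moreover have "finite X" using that fD finite_subset by blast
    ultimately show ?thesis using cone_char[OF fD _ sD _ that(4), of X] that sD by auto
  qed
  define sameS where "sameS i j \<longleftrightarrow> (\<sigma> i < \<sigma> j \<and> conn S (\<sigma> i) (\<sigma> j)) \<or> (\<sigma> j < \<sigma> i \<and> conn S (\<sigma> j) (\<sigma> i))" for i j
  have rid: "root_act \<tau> (\<sigma> i, \<sigma> j) = (i, j)" for i j by (simp add: root_act_def ts)
  have fS: "finite S" using SD fD finite_subset by blast
  have sS: "\<forall>s\<in>S. snd s = Suc (fst s)" using SD sD by auto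
  have sne: "\<sigma> i \<noteq> \<sigma> j" if "i \<noteq> j" for i j using that bij by (metis ts)
  have coneS': "in_cone S' S' (i,j) \<longleftrightarrow> sameS i j" if "i \<noteq> j" for i j
    using cone_transport[OF bt, of S S "(\<sigma> i, \<sigma> j)"] cone_char[OF fS fS sS sS sne[OF that]]
    unfolding S'_def rid sameS_def by simp
  have injt: "inj (root_act \<tau>)" using bt unfolding inj_def root_act_def bij_def by (auto simp: inj_eq)
  have TS: "T' \<inter> S' = root_act \<tau> ` (root_act \<sigma> ` T' \<inter> S)"
  proof -
    have "root_act \<tau> ` root_act \<sigma> ` T' = T'" by (simp add: image_image root_act_def ts)
    then show ?thesis unfolding S'_def by (simp add: image_Int[OF injt])
  qed
  have coneTS: "in_cone S' (T' \<inter> S') (i,j) \<longleftrightarrow>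
     (\<sigma> i < \<sigma> j \<and> conn S (\<sigma> i) (\<sigma> j)) \<or> (\<sigma> j < \<sigma> i \<and> conn (root_act \<sigma> ` T' \<inter> S) (\<sigma> j) (\<sigma> i))"
    if "i \<noteq> j" for i j
  proof -
    have f2: "finite (root_act \<sigma> ` T' \<inter> S)" using fS by simp
    have s2: "\<forall>s\<in>root_act \<sigma> ` T' \<inter> S. snd s = Suc (fst s)" using sS by auto
    show ?thesis
      using cone_transport[OF bt, of S "root_act \<sigma> ` T' \<inter> S" "(\<sigma> i, \<sigma> j)"] cone_char[OF fS f2 sS s2 sne[OF that]]
      unfolding TS unfolding S'_def rid by simp
  qed
  have sT: "\<forall>s\<in>T'. snd s = Suc (fst s)" using TD sD by auto
  have keyL: "(i < j \<or> (j < i \<and> conn T' j i)) \<longleftrightarrow> in_cone S' (T' \<inter> S') (i,j)"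
    if "sameS i j" "i \<noteq> j" for i j
    unfolding coneTS[OF that(2)]
    by (rule key[OF bij \<tau>_def hT hS sT that(2)]) (use that(1) in \<open>simp add: sameS_def\<close>)
  have Heq: "H = tmat m \<sigma> ` P"
    unfolding H_def conj_by_perm_def conj_formula[OF p] by auto
  have rootsH: "(i,j) \<in> roots_of m H \<longleftrightarrow> in_cone D S (\<sigma> i, \<sigma> j)"
    if "i < m" "j < m" "i \<noteq> j" for i j
  proof
    assume "(i,j) \<in> roots_of m H"
    then have "elem_mat m i j 1 \<in> H" by (auto simp: roots_of_def)
    then obtain h where h: "h \<in> P" "elem_mat m i j 1 = tmat m \<sigma> h" unfolding Heq by blast
    then have "elem_mat m i j 1 i j = tmat m \<sigma> h i j" by simp
    then have "h (\<sigma> i) (\<sigma> j) = 1"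
      using that by (simp add: elem_mat_def idm_def tmat_def)
    with h(1) show "in_cone D S (\<sigma> i, \<sigma> j)"
      using that slt sne unfolding P_def P_ST_def roots_def by fastforce
  next
    assume c: "in_cone D S (\<sigma> i, \<sigma> j)"
    have "elem_mat m (\<sigma> i) (\<sigma> j) c \<in> P" for c
      unfolding P_def P_ST_def
      using elem_GL[OF sne[OF that(3)] slt[OF that(1)] slt[OF that(2)], of c] c
      by (auto simp: elem_mat_def idm_def roots_def)
    then have "elem_mat m i j c \<in> H" for c
      unfolding Heq using tmat_elem[OF p that(1,2), of c] by (metis image_eqI)
    then show "(i,j) \<in> roots_of m H" using that by (auto simp: roots_of_def roots_def)
  qed
  have levi_cond: "((i,j) \<in> roots_of m H \<and> (j,i) \<in> roots_of m H) \<longleftrightarrow> sameS i j"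
    if "i < m" "j < m" "i \<noteq> j" for i j
    unfolding rootsH[OF that] rootsH[OF that(2,1) that(3)[symmetric]]
      coneD[OF SD slt[OF that(1)] slt[OF that(2)] sne[OF that(3)]]
      coneD[OF SD slt[OF that(2)] slt[OF that(1)] sne[OF that(3)[symmetric]]]
      sameS_def
    by auto
  have GLU: "GLm m R \<subseteq> GLm m UNIV" for R :: "'a set" by (auto simp: GLm_def)
  have inH: "g \<in> H" if g: "g \<in> GLm m (val_ring v)" and sup: "\<forall>i j. i < m \<longrightarrow> j < m \<longrightarrow> i \<noteq> j \<longrightarrow> g i j \<noteq> 0 \<longrightarrow> sameS i j" for g
  proof -
    define g' where "g' = tmat m \<tau> g"
    have gm: "g \<in> mats m" using g by (auto simp: GLm_def)
    have "g' \<in> GLm m UNIV" unfolding g'_def by (rule tmat_GL[OF pt _ ]) (use g GLU in auto)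
    moreover have "in_cone D S (k,l)" if "(k,l) \<in> roots m" "g' k l \<noteq> 0" for k l
    proof -
      have kl: "k < m" "l < m" "k \<noteq> l" using that(1) by (auto simp: roots_def)
      have "g (\<tau> k) (\<tau> l) \<noteq> 0" using that(2) kl by (simp add: g'_def tmat_def)
      moreover have "\<tau> k \<noteq> \<tau> l" using kl by (metis st)
      ultimately have "sameS (\<tau> k) (\<tau> l)" using sup tlt kl by blast
      then show ?thesis unfolding coneD[OF SD kl] sameS_def st by auto
    qed
    ultimately have "g' \<in> P" unfolding P_def P_ST_def by auto
    moreover have "tmat m \<sigma> g' = g" unfolding g'_def \<tau>_def by (rule tmat_tmat[OF p gm])
    ultimately show ?thesis unfolding Heq by (metis image_eqI)
  qed
  have zI: "0 \<in> unif_ideal v \<pi>" unfolding unif_ideal_def val_ring_def by auto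
  have DD: "in_cone D D (i,j)" if "i < m" "j < m" "i \<noteq> j" for i j
    unfolding coneD[OF order_refl that] using that by (auto simp: conn_def D_def simple_roots_def)
  have "Levi m H \<inter> J_ST v \<pi> m D T' = J_ST v \<pi> m S' (T' \<inter> S')"
  proof (intro set_eqI iffI)
    fix g assume g: "g \<in> Levi m H \<inter> J_ST v \<pi> m D T'"
    have gGL: "g \<in> GLm m (val_ring v)" using g by (auto simp: J_ST_def P_ST_def)
    have sup: "sameS i j" if "i < m" "j < m" "i \<noteq> j" "g i j \<noteq> 0" for i j
      using g that levi_cond[OF that(1-3)] by (auto simp: Levi_def roots_def)
    have J: "g i j \<in> unif_ideal v \<pi>" if "i < m" "j < m" "i \<noteq> j" "\<not> in_cone D T' (i,j)" for i j
      using g that by (auto simp: J_ST_def roots_def)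
    show "g \<in> J_ST v \<pi> m S' (T' \<inter> S')"
      unfolding J_ST_def P_ST_def
    proof (intro CollectI conjI ballI impI)
      show "g \<in> GLm m (val_ring v)" by (rule gGL)
    next
      fix \<alpha> assume "\<alpha> \<in> roots m" "g (fst \<alpha>) (snd \<alpha>) \<noteq> 0"
      then show "in_cone S' S' \<alpha>" using sup coneS' by (auto simp: roots_def)
    next
      fix \<alpha> assume a: "\<alpha> \<in> roots m" "\<not> in_cone S' (T' \<inter> S') \<alpha>"
      obtain i j where ij: "\<alpha> = (i,j)" "i < m" "j < m" "i \<noteq> j" using a(1) by (auto simp: roots_def)
      show "g (fst \<alpha>) (snd \<alpha>) \<in> unif_ideal v \<pi>"
      proof (cases "g i j = 0")
        case True then show ?thesis using ij zI by simp
      next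
        case False
        then have "sameS i j" using sup ij by blast
        with keyL[OF this ij(4)] a(2) ij have "\<not> in_cone D T' (i,j)"
          using coneD[OF TD ij(2-4)] by simp
        then show ?thesis using J ij by simp
      qed
    qed
  next
    fix g assume g: "g \<in> J_ST v \<pi> m S' (T' \<inter> S')"
    have gGL: "g \<in> GLm m (val_ring v)" using g by (auto simp: J_ST_def P_ST_def)
    have sup: "sameS i j" if "i < m" "j < m" "i \<noteq> j" "g i j \<noteq> 0" for i j
      using g that coneS'[OF that(3)] by (auto simp: J_ST_def P_ST_def roots_def)
    have J: "g i j \<in> unif_ideal v \<pi>" if "i < m" "j < m" "i \<noteq> j" "\<not> in_cone S' (T' \<inter> S') (i,j)" for i j
      using g that by (auto simp: J_ST_def roots_def)
    have "g \<in> H" using inH gGL sup by blast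
    moreover have "g \<in> Levi m H"
      unfolding Levi_def using \<open>g \<in> H\<close> sup levi_cond by (auto simp: roots_def)
    moreover have "g \<in> J_ST v \<pi> m D T'"
      unfolding J_ST_def P_ST_def
    proof (intro CollectI conjI ballI impI)
      show "g \<in> GLm m (val_ring v)" by (rule gGL)
    next
      fix \<alpha> assume "\<alpha> \<in> roots m" "g (fst \<alpha>) (snd \<alpha>) \<noteq> 0"
      then show "in_cone D D \<alpha>" using DD by (auto simp: roots_def)
    next
      fix \<alpha> assume a: "\<alpha> \<in> roots m" "\<not> in_cone D T' \<alpha>"
      obtain i j where ij: "\<alpha> = (i,j)" "i < m" "j < m" "i \<noteq> j" using a(1) by (auto simp: roots_def)
      show "g (fst \<alpha>) (snd \<alpha>) \<in> unif_ideal v \<pi>"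
      proof (cases "g i j = 0")
        case True then show ?thesis using ij zI by simp
      next
        case False
        then have "sameS i j" using sup ij by blast
        with keyL[OF this ij(4)] a(2) ij have "\<not> in_cone S' (T' \<inter> S') (i,j)"
          using coneD[OF TD ij(2-4)] by simp
        then show ?thesis using J ij by simp
      qed
    qed
    ultimately show "g \<in> Levi m H \<inter> J_ST v \<pi> m D T'" by blast
  qed
  then show ?thesis unfolding m_def D_def H_def P_def S'_def \<tau>_def .
qed

end
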